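(* Let $(\mathbf{T},d,r,\mu)$ be an IP-tree. Then for every $\varepsilon>0$ there exist $m_1,m_2\in\mathbb{N}$ and measurable sets $A_1,\dots,A_{m_1},B_1,\dots,B_{m_2},S\subseteq\mathbf{T}$ such that (1) $A_1,\dots,A_{m_1},B_1,\dots,B_{m_2},S$ partition $\mathbf{T}$; (2) $\mu(S)\le\varepsilon$, and for all $i\in[m_1]$, $j\in[m_2]$: $\operatorname{diam}(A_i)\le\varepsilon$, $\mu(A_i)\le\varepsilon$ and $\#B_j=1$; (3) the closure of $\bigcup_{i=1}^{m_1}A_i\cup\bigcup_{j=1}^{m_2}B_j$ is connected; (4) for every $x\in\mathbf{T}$ there are $I_x\subseteq[m_1]$, $J_x\subseteq[m_2]$ and $k_x\in[m_1]$ such that $$F_{\mathbf{T}}(x)\,\Delta\Big(\bigcup_{i\in I_x}A_i\cup\bigcup_{j\in J_x}B_j\Big)\subseteq A_{k_x}\cup S,$$ where $\Delta$ denotes symmetric difference.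
   Context: A real tree is a complete separable metric space $(\mathbf{T},d)$ in which any two points $x,y$ are joined by a unique non-self-intersecting path $[x,y]$, isometric to a closed real interval; it is rooted at $r$ and carries a Borel probability measure $\mu$. $F_{\mathbf{T}}(x)=\{y\in\mathbf{T}:x\in[r,y]\}$. A leaf is a point $x\ne r$ such that $\mathbf{T}\setminus\{x\}$ is connected; a branchpoint is a point whose removal leaves at least 3 components. $(\mathbf{T},d,r,\mu)$ is an IP-tree if every leaf lies in the closed support of $\mu$ and $d(r,x)+\mu(F_{\mathbf{T}}(x))=1$ for every $x$ that is a branchpoint or lies in the closed support of $\mu$. $[m]=\{1,\dots,m\}$. *)

theory Defs
  imports "HOL-Analysis.Analysis" "HOL-Probability.Probability"
begin

text \<open>The real tree is the whole type 'a (a complete separable metric space,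
  i.e. class polish_space).\<close>

definition arc_between :: "'a::topological_space \<Rightarrow> 'a \<Rightarrow> 'a set \<Rightarrow> bool" where
  "arc_between x y A \<longleftrightarrow>
     (\<exists>g. arc g \<and> pathstart g = x \<and> pathfinish g = y \<and> path_image g = A)"

definition real_tree :: "'a::polish_space itself \<Rightarrow> bool" where
  "real_tree _ \<longleftrightarrow>
     (\<forall>x y::'a. x \<noteq> y \<longrightarrow>
        (\<exists>!A. arc_between x y A) \<and>
        (\<exists>A \<gamma>. arc_between x y A \<and> \<gamma> ` {0..dist x y} = A \<and> \<gamma> 0 = x \<and> \<gamma> (dist x y) = y \<and>
               (\<forall>s\<in>{0..dist x y}. \<forall>t\<in>{0..dist x y}. dist (\<gamma> s) (\<gamma> t) = \<bar>s - t\<bar>)))"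

definition tseg :: "'a::topological_space \<Rightarrow> 'a \<Rightarrow> 'a set" where
  "tseg x y = (if x = y then {x} else (THE A. arc_between x y A))"

text \<open>F_T(x) = {y : x \<in> [r,y]}.\<close>
definition subtree :: "'a::topological_space \<Rightarrow> 'a \<Rightarrow> 'a set" where
  "subtree r x = {y. x \<in> tseg r y}"

definition is_leaf :: "'a::topological_space \<Rightarrow> 'a \<Rightarrow> bool" where
  "is_leaf r x \<longleftrightarrow> x \<noteq> r \<and> connected (UNIV - {x})"

definition is_branchpoint :: "'a::topological_space \<Rightarrow> bool" where
  "is_branchpoint x \<longleftrightarrow> infinite (components (UNIV - {x})) \<or> card (components (UNIV - {x})) \<ge> 3"

definition msupp :: "'a::metric_space measure \<Rightarrow> 'a set" where
  "msupp \<mu> = {x. \<forall>e>0. emeasure \<mu> (ball x e) > 0}"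

definition IP_tree :: "'a::polish_space \<Rightarrow> 'a measure \<Rightarrow> bool" where
  "IP_tree r \<mu> \<longleftrightarrow>
     real_tree TYPE('a) \<and>
     sets \<mu> = sets borel \<and> prob_space \<mu> \<and>
     (\<forall>x. is_leaf r x \<longrightarrow> x \<in> msupp \<mu>) \<and>
     (\<forall>x. is_branchpoint x \<or> x \<in> msupp \<mu> \<longrightarrow> dist r x + measure \<mu> (subtree r x) = 1)"

end

theory Submission
  imports Defs
begin

definition isom_on :: "(real \<Rightarrow> 'a::metric_space) \<Rightarrow> real set \<Rightarrow> bool" where
  "isom_on g S \<longleftrightarrow> (\<forall>s\<in>S. \<forall>t\<in>S. dist (g s) (g t) = \<bar>s - t\<bar>)"

lemma tseg_refl [simp]: "tseg x x = {x}"
  by (simp add: tseg_def)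

lemma rt_unique:
  fixes x y :: "'a::polish_space"
  assumes RT: "real_tree TYPE('a)" and "x \<noteq> y"
  shows "arc_between x y (tseg x y)" "arc_between x y A \<Longrightarrow> A = tseg x y"
proof -
  have ex: "\<exists>!A. arc_between x y A" using RT assms(2) unfolding real_tree_def by blast
  show a: "arc_between x y (tseg x y)" using theI'[OF ex] assms(2) by (simp add: tseg_def)
  show "arc_between x y A \<Longrightarrow> A = tseg x y" using a ex by blast
qed

lemma isom_cont: "isom_on g S \<Longrightarrow> continuous_on S g"
  unfolding continuous_on_iff isom_on_def
  by (metis dist_real_def)

lemma isom_arc:
  fixes g :: "real \<Rightarrow> 'a::metric_space"
  assumes "isom_on g {u..v}" "u < v"
  shows "arc_between (g u) (g v) (g ` {u..v})"
proof -
  define q where "q = g \<circ> (\<lambda>t. (v-u) * t + u)"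
  have im: "(\<lambda>t. (v-u) * t + u) ` {0..1} = {u..v}"
    using assms(2) by (simp add: image_affinity_atLeastAtMost)
  have "continuous_on {0..1} q" unfolding q_def
    by (rule continuous_on_compose) (auto intro!: continuous_intros simp: im isom_cont[OF assms(1)])
  moreover have "inj_on q {0..1}"
  proof
    fix s t assume s: "s \<in> {0..1::real}" and t: "t \<in> {0..1::real}" and e: "q s = q t"
    have "((v - u) * s + u) \<in> {u..v}" "((v - u) * t + u) \<in> {u..v}" unfolding im[symmetric] using s t by (auto intro!: image_eqI)
    then have "dist (q s) (q t) = \<bar>((v - u) * s + u) - ((v - u) * t + u)\<bar>"
      using assms(1) unfolding isom_on_def q_def by auto
    then have "\<bar>(v-u)*(s-t)\<bar> = 0" using e by (simp add: algebra_simps)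
    then show "s = t" using assms(2) by (simp add: abs_mult)
  qed
  ultimately have "arc q" by (simp add: arc_def path_def)
  moreover have "pathstart q = g u" "pathfinish q = g v" by (auto simp: q_def pathstart_def pathfinish_def)
  moreover have "path_image q = g ` {u..v}" unfolding path_image_def q_def image_comp[symmetric] im ..
  ultimately show ?thesis unfolding arc_between_def by blast
qed

lemma tseg_isom:
  fixes g :: "real \<Rightarrow> 'a::polish_space"
  assumes RT: "real_tree TYPE('a)" and "isom_on g {u..v}" "u \<le> v"
  shows "tseg (g u) (g v) = g ` {u..v}"
proof (cases "u = v")
  case True then show ?thesis by simp
next
  case False
  then have uv: "u < v" using assms by simp
  have "dist (g u) (g v) = v - u" using assms(2) uv unfolding isom_on_def by auto
  then have "g u \<noteq> g v" using uv by auto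
  then show ?thesis using rt_unique(2)[OF RT _ isom_arc[OF assms(2) uv]] by auto
qed

lemma rt_param:
  fixes x y :: "'a::polish_space"
  assumes RT: "real_tree TYPE('a)"
  obtains g where "g 0 = x" "g (dist x y) = y" "tseg x y = g ` {0..dist x y}" "isom_on g {0..dist x y}"
proof (cases "x = y")
  case True
  then show ?thesis using that[of "\<lambda>_. x"] by (auto simp: isom_on_def)
next
  case False
  then obtain A g where A: "arc_between x y A" "g ` {0..dist x y} = A" "g 0 = x" "g (dist x y) = y"
     "\<forall>s\<in>{0..dist x y}. \<forall>t\<in>{0..dist x y}. dist (g s) (g t) = \<bar>s - t\<bar>"
    using RT unfolding real_tree_def by blast
  have "A = tseg x y" using rt_unique(2)[OF RT False A(1)] .
  then show ?thesis using that[of g] A by (auto simp: isom_on_def)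
qed

lemma isom_sub: "isom_on g S \<Longrightarrow> T \<subseteq> S \<Longrightarrow> isom_on g T"
  unfolding isom_on_def by blast

lemma tseg_sym:
  fixes x y :: "'a::polish_space"
  assumes RT: "real_tree TYPE('a)"
  shows "tseg x y = tseg y x"
proof -
  obtain g where g: "g 0 = x" "g (dist x y) = y" "tseg x y = g ` {0..dist x y}" "isom_on g {0..dist x y}"
    using rt_param[OF RT] .
  define d where "d = dist x y"
  define g' where "g' = (\<lambda>t. g (d - t))"
  have "isom_on g' {0..d}" using g(4) unfolding isom_on_def g'_def d_def by auto
  then have "tseg (g' 0) (g' d) = g' ` {0..d}" using tseg_isom[OF RT, of g' 0 d] by (auto simp: d_def)
  moreover have "g' ` {0..d} = g ` {0..d}"
  proof -
    have "(\<lambda>t. d - t) ` {0..d} = {0..d}"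
      using image_affinity_atLeastAtMost[of "-1" d 0 d] by (simp add: d_def)
    then show ?thesis unfolding g'_def by (metis image_image)
  qed
  ultimately show ?thesis using g by (simp add: g'_def d_def)
qed

lemma tseg_ends:
  fixes x y :: "'a::polish_space"
  assumes RT: "real_tree TYPE('a)"
  shows "x \<in> tseg x y" "y \<in> tseg x y"
proof -
  obtain g where g: "g 0 = x" "g (dist x y) = y" "tseg x y = g ` {0..dist x y}" "isom_on g {0..dist x y}"
    using rt_param[OF RT] .
  show "x \<in> tseg x y" using g by force
  show "y \<in> tseg x y" using g by (metis atLeastAtMost_iff image_eqI order_refl zero_le_dist)
qed

lemma tseg_point:
  fixes x y w :: "'a::polish_space"
  assumes RT: "real_tree TYPE('a)" and w: "w \<in> tseg x y"
  shows "dist x w + dist w y = dist x y" "tseg x w \<subseteq> tseg x y" "tseg w y \<subseteq> tseg x y"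
    "tseg x y = tseg x w \<union> tseg w y"
proof -
  obtain g where g: "g 0 = x" "g (dist x y) = y" "tseg x y = g ` {0..dist x y}" "isom_on g {0..dist x y}"
    using rt_param[OF RT] .
  obtain s where s: "s \<in> {0..dist x y}" "w = g s" using w g(3) by auto
  have "dist x w = s" "dist w y = dist x y - s" using g(4) s g(1,2) unfolding isom_on_def
    by (metis abs_of_nonneg atLeastAtMost_iff diff_ge_0_iff_ge diff_zero dist_commute order_refl zero_le_dist)+
  then show "dist x w + dist w y = dist x y" by simp
  have 1: "tseg x w = g ` {0..s}" using tseg_isom[OF RT isom_sub[OF g(4)], of 0 s] s g by auto
  have 2: "tseg w y = g ` {s..dist x y}" using tseg_isom[OF RT isom_sub[OF g(4)], of s "dist x y"] s g by auto
  show "tseg x w \<subseteq> tseg x y" "tseg w y \<subseteq> tseg x y" using 1 2 g(3) s by auto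
  have "{0..dist x y} = {0..s} \<union> {s..dist x y}" using s by auto
  then show "tseg x y = tseg x w \<union> tseg w y" using 1 2 g(3) by auto
qed

lemma tseg_comp:
  fixes x y a b :: "'a::polish_space"
  assumes RT: "real_tree TYPE('a)" and "a \<in> tseg x y" "b \<in> tseg x y"
  shows "a \<in> tseg x b \<or> b \<in> tseg x a"
proof -
  obtain g where g: "g 0 = x" "g (dist x y) = y" "tseg x y = g ` {0..dist x y}" "isom_on g {0..dist x y}"
    using rt_param[OF RT] .
  obtain s t where st: "s \<in> {0..dist x y}" "a = g s" "t \<in> {0..dist x y}" "b = g t" using assms g(3) by auto
  have 1: "tseg x a = g ` {0..s}" using tseg_isom[OF RT isom_sub[OF g(4)], of 0 s] st g by auto
  have 2: "tseg x b = g ` {0..t}" using tseg_isom[OF RT isom_sub[OF g(4)], of 0 t] st g by auto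
  show ?thesis
  proof (cases "s \<le> t")
    case True then show ?thesis using 2 st by auto
  next
    case False then show ?thesis using 1 st by auto
  qed
qed

lemma tseg_compact:
  fixes x y :: "'a::polish_space"
  assumes RT: "real_tree TYPE('a)"
  shows "compact (tseg x y)" "connected (tseg x y)"
proof -
  obtain g where g: "g 0 = x" "g (dist x y) = y" "tseg x y = g ` {0..dist x y}" "isom_on g {0..dist x y}"
    using rt_param[OF RT] .
  show "compact (tseg x y)" using g(3) compact_continuous_image[OF isom_cont[OF g(4)]] by auto
  show "connected (tseg x y)" using g(3) connected_continuous_image[OF isom_cont[OF g(4)]] by auto
qed

lemma arc_between_sym: "arc_between x y A \<Longrightarrow> arc_between y x A"
  unfolding arc_between_def
  by (metis arc_reversepath path_image_reversepath pathfinish_reversepath pathstart_reversepath)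

lemma tseg_tripod:
  fixes x y z :: "'a::polish_space"
  assumes RT: "real_tree TYPE('a)"
  shows "tseg x z \<subseteq> tseg x y \<union> tseg y z"
proof -
  obtain b where b: "b 0 = y" "b (dist y z) = z" "tseg y z = b ` {0..dist y z}" "isom_on b {0..dist y z}"
    using rt_param[OF RT] .
  define T where "T = {0..dist y z} \<inter> b -` tseg y x"
  have "closed T" unfolding T_def
    by (rule continuous_closed_preimage[OF isom_cont[OF b(4)]]) (auto intro: compact_imp_closed tseg_compact[OF RT])
  then have "compact T" unfolding compact_eq_bounded_closed
    by (simp add: T_def bounded_Int bounded_closed_interval)
  moreover have "0 \<in> T" using b tseg_ends[OF RT] unfolding T_def by auto
  ultimately obtain s where s: "s \<in> T" "\<And>t. t \<in> T \<Longrightarrow> t \<le> s"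
    using compact_attains_sup[of T] by (metis empty_iff)
  define w where "w = b s"
  have s01: "s \<in> {0..dist y z}" and wyx: "w \<in> tseg y x" using s(1) unfolding T_def w_def by auto
  have twz: "tseg w z = b ` {s..dist y z}"
    using tseg_isom[OF RT isom_sub[OF b(4)], of s "dist y z"] s01 b(2) w_def by auto
  have wz_sub: "tseg w z \<subseteq> tseg y z" using twz b(3) s01 by auto
  have xw_sub: "tseg x w \<subseteq> tseg x y"
    using tseg_point(3)[OF RT wyx] tseg_sym[OF RT, of x w] tseg_sym[OF RT, of x y] by simp
  show ?thesis
  proof (cases "w = x")
    case True
    then show ?thesis using wz_sub by auto
  next
    case wx: False
    show ?thesis
    proof (cases "w = z")
      case True
      then show ?thesis using xw_sub by auto
    next
      case wz: False
      have int: "tseg x w \<inter> tseg w z \<subseteq> {w}"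
      proof
        fix v assume v: "v \<in> tseg x w \<inter> tseg w z"
        then obtain t where t: "t \<in> {s..dist y z}" "v = b t" using twz by auto
        have "v \<in> tseg y x" using v tseg_point(3)[OF RT wyx] tseg_sym[OF RT, of x w] by auto
        then have "t \<in> T" using t s01 unfolding T_def by auto
        then have "t = s" using s(2) t(1) by force
        then show "v \<in> {w}" using t w_def by simp
      qed
      obtain g1 where g1: "arc g1" "pathstart g1 = x" "pathfinish g1 = w" "path_image g1 = tseg x w"
        using rt_unique(1)[OF RT, of x w] wx unfolding arc_between_def by metis
      obtain g2 where g2: "arc g2" "pathstart g2 = w" "pathfinish g2 = z" "path_image g2 = tseg w z"
        using rt_unique(1)[OF RT, of w z] wz unfolding arc_between_def by metis
      have "arc (g1 +++ g2)" using arc_join[OF g1(1) g2(1)] g1 g2 int by auto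
      then have "arc_between x z (tseg x w \<union> tseg w z)"
        unfolding arc_between_def using g1 g2 path_image_join[of g1 g2]
        by (intro exI[of _ "g1 +++ g2"]) simp
      moreover have "x \<noteq> z"
      proof
        assume "x = z"
        then have "x \<in> tseg x w \<inter> tseg w z" using tseg_ends[OF RT] by auto
        then show False using int wx by auto
      qed
      ultimately have "tseg x z = tseg x w \<union> tseg w z" using rt_unique(2)[OF RT, of x z] by simp
      then show ?thesis using xw_sub wz_sub by auto
    qed
  qed
qed

lemma subtree_closed:
  fixes r a :: "'a::polish_space"
  assumes RT: "real_tree TYPE('a)"
  shows "closed (subtree r a)"
  unfolding closed_def open_dist
proof (intro ballI)
  fix y assume "y \<in> - subtree r a"
  then have ay: "a \<notin> tseg r y" unfolding subtree_def by auto
  then have "a \<noteq> y" using tseg_ends[OF RT] by auto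
  then have pos: "dist a y > 0" by simp
  show "\<exists>e>0. \<forall>z. dist z y < e \<longrightarrow> z \<in> - subtree r a"
  proof (intro exI conjI allI impI)
    fix z assume z: "dist z y < dist a y"
    show "z \<in> - subtree r a"
    proof
      assume "z \<in> subtree r a"
      then have "a \<in> tseg r z" unfolding subtree_def by auto
      then have "a \<in> tseg y z" using tseg_tripod[OF RT, of r z y] ay by blast
      then have "dist y a + dist a z = dist y z" by (rule tseg_point(1)[OF RT])
      then show False using z zero_le_dist[of a z] dist_commute[of y a] dist_commute[of z y] by linarith
    qed
  qed (rule pos)
qed

lemma ht_add:
  fixes r a y :: "'a::polish_space"
  assumes RT: "real_tree TYPE('a)" and "a \<in> tseg r y"
  shows "dist r y = dist r a + dist a y"
  using tseg_point(1)[OF RT assms(2)] by simp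

lemma tseg_trans:
  fixes r a x y :: "'a::polish_space"
  assumes RT: "real_tree TYPE('a)" and "a \<in> tseg r x" "x \<in> tseg r y"
  shows "a \<in> tseg r y"
  using tseg_point(2)[OF RT assms(3)] assms(2) by auto

lemma tseg_antisym:
  fixes r a b :: "'a::polish_space"
  assumes RT: "real_tree TYPE('a)" and "a \<in> tseg r b" "b \<in> tseg r a"
  shows "a = b"
proof -
  have "dist r b = dist r a + dist a b" "dist r a = dist r b + dist b a"
    using ht_add[OF RT assms(2)] ht_add[OF RT assms(3)] by auto
  then have "dist a b = 0" by (simp add: dist_commute)
  then show ?thesis by simp
qed

lemma tseg_ht_inj:
  fixes r a b c :: "'a::polish_space"
  assumes RT: "real_tree TYPE('a)" and "a \<in> tseg r c" "b \<in> tseg r c" "dist r a = dist r b"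
  shows "a = b"
proof -
  have "a \<in> tseg r b \<or> b \<in> tseg r a" using tseg_comp[OF RT assms(2,3)] .
  then show ?thesis
  proof
    assume "a \<in> tseg r b"
    then have "dist r b = dist r a + dist a b" by (rule ht_add[OF RT])
    then show ?thesis using assms(4) by simp
  next
    assume "b \<in> tseg r a"
    then have "dist r a = dist r b + dist b a" by (rule ht_add[OF RT])
    then show ?thesis using assms(4) by simp
  qed
qed

lemma tight:
  fixes \<mu> :: "'a::polish_space measure"
  assumes sb: "sets \<mu> = sets borel" and P: "prob_space \<mu>" and e: "\<epsilon> > 0"
  obtains K where "compact K" "measure \<mu> (UNIV - K) \<le> \<epsilon>"
proof -
  interpret prob_space \<mu> by (rule P)
  have sp: "space \<mu> = UNIV" by (metis sb sets_eq_imp_space_eq space_borel)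
  define e' where "e' = min \<epsilon> (1/2)"
  have e': "0 < e'" "e' \<le> \<epsilon>" "e' \<le> 1/2" using e by (auto simp: e'_def)
  have "emeasure \<mu> UNIV = (SUP K \<in> {K. K \<subseteq> UNIV \<and> compact K}. emeasure \<mu> K)"
    using inner_regular[OF sb, of UNIV] sp by (simp add: emeasure_space_1)
  moreover have "emeasure \<mu> UNIV = 1" using emeasure_space_1 sp by simp
  moreover have "ennreal (1 - e') < 1" using e' by (simp add: ennreal_lessI)
  ultimately obtain K where K: "compact K" "ennreal (1 - e') < emeasure \<mu> K"
    by (metis (no_types, lifting) less_SUP_iff mem_Collect_eq)
  have Ks: "K \<in> sets \<mu>" using K(1) sb by (simp add: borel_compact)
  have "1 - e' < measure \<mu> K" using K(2) e' by (simp add: emeasure_eq_measure ennreal_less_iff)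
  moreover have "measure \<mu> (UNIV - K) = 1 - measure \<mu> K" using prob_compl[OF Ks] sp by simp
  ultimately show ?thesis using that[OF K(1)] e' by simp
qed

lemma local_small:
  fixes \<mu> :: "'a::polish_space measure"
  assumes sb: "sets \<mu> = sets borel" and P: "prob_space \<mu>" and e: "\<epsilon> > 0"
  shows "\<exists>t>0. measure \<mu> (ball x (2*t) - {x}) \<le> \<epsilon>"
proof -
  interpret prob_space \<mu> by (rule P)
  define A where "A n = ball x (1 / Suc n) - {x}" for n :: nat
  have Ab: "A n \<in> sets borel" for n unfolding A_def
    by (intro sets.Diff borel_open borel_closed) auto
  have As: "range A \<subseteq> sets \<mu>" unfolding sb using Ab by blast
  have dec: "decseq A"
  proof (rule decseq_SucI)
    fix n
    have "1 / real (Suc (Suc n)) \<le> 1 / real (Suc n)" by (rule frac_le) auto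
    then show "A (Suc n) \<subseteq> A n" unfolding A_def by auto
  qed
  have "(\<Inter>n. A n) = {}"
  proof -
    { fix y assume y: "y \<in> (\<Inter>n. A n)"
      then have "y \<noteq> x" unfolding A_def by auto
      then have "dist x y > 0" by simp
      then obtain n :: nat where n: "1 / Suc n < dist x y" by (rule nat_approx_posE)
      then have "y \<notin> A n" unfolding A_def by simp
      then have False using y by simp }
    then show ?thesis by blast
  qed
  then have "(\<lambda>n. measure \<mu> (A n)) \<longlonglongrightarrow> 0" using finite_Lim_measure_decseq[OF As dec] by simp
  then have "eventually (\<lambda>n. measure \<mu> (A n) < \<epsilon>) sequentially" using e by (rule order_tendstoD)
  then obtain n where n: "measure \<mu> (A n) < \<epsilon>" unfolding eventually_sequentially by blast
  have t: "2 * (1 / (2 * real (Suc n))) = 1 / real (Suc n)" by (simp add: field_simps)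
  show ?thesis
  proof (intro exI conjI)
    show "1 / (2 * real (Suc n)) > 0" by simp
    show "measure \<mu> (ball x (2 * (1 / (2 * real (Suc n)))) - {x}) \<le> \<epsilon>"
      unfolding t using n by (simp add: A_def)
  qed
qed

lemma lebesgue_small:
  fixes \<mu> :: "'a::polish_space measure"
  assumes sb: "sets \<mu> = sets borel" and P: "prob_space \<mu>" and e: "\<epsilon> > 0" and K: "compact K"
  obtains \<rho> X where "\<rho> > 0" "finite X" "\<And>y. y \<in> K \<Longrightarrow> measure \<mu> (cball y \<rho> - X) \<le> \<epsilon>"
proof -
  interpret prob_space \<mu> by (rule P)
  have "\<forall>x. \<exists>t. t > 0 \<and> measure \<mu> (ball x (2 * t) - {x}) \<le> \<epsilon>"
    using local_small[OF sb P e] by blast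
  then have "\<exists>t. \<forall>x. t x > 0 \<and> measure \<mu> (ball x (2 * t x) - {x}) \<le> \<epsilon>" by (rule choice)
  then obtain t where t: "\<And>x. t x > 0" "\<And>x. measure \<mu> (ball x (2 * t x) - {x}) \<le> \<epsilon>"
    by blast
  have "K \<subseteq> (\<Union>x\<in>K. ball x (t x))" using t(1) by auto
  then obtain X where X: "X \<subseteq> K" "finite X" "K \<subseteq> (\<Union>x\<in>X. ball x (t x))"
    using compactE_image[OF K, of K "\<lambda>x. ball x (t x)"] by auto
  define \<rho> where "\<rho> = Min (insert 1 (t ` X))"
  have fin: "finite (insert 1 (t ` X))" using X(2) by simp
  have rpos: "\<rho> > 0" unfolding \<rho>_def using fin t(1) by (auto simp: Min_gr_iff)
  have rle: "\<rho> \<le> t x" if "x \<in> X" for x unfolding \<rho>_def using fin that by (auto intro: Min_le)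
  show ?thesis
  proof (rule that[OF rpos X(2)])
    fix y assume "y \<in> K"
    then obtain x where x: "x \<in> X" "dist x y < t x" using X(3) by auto
    have "cball y \<rho> - X \<subseteq> ball x (2 * t x) - {x}"
    proof
      fix z assume z: "z \<in> cball y \<rho> - X"
      then have "dist y z \<le> \<rho>" by simp
      then have "dist x z < 2 * t x" using x rle[OF x(1)] dist_triangle[of x z y] by simp
      then show "z \<in> ball x (2 * t x) - {x}" using z x(1) by auto
    qed
    moreover have "ball x (2 * t x) - {x} \<in> sets borel"
      by (intro sets.Diff borel_open borel_closed) auto
    then have "ball x (2 * t x) - {x} \<in> sets \<mu>" unfolding sb .
    ultimately show "measure \<mu> (cball y \<rho> - X) \<le> \<epsilon>"
      using finite_measure_mono t(2)[of x] by (meson order_trans)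
  qed
qed

lemma net:
  fixes K :: "'a::metric_space set"
  assumes "compact K" "\<delta> > 0"
  obtains C where "finite C" "C \<subseteq> K" "K \<subseteq> (\<Union>c\<in>C. ball c \<delta>)"
proof -
  have "K \<subseteq> (\<Union>x\<in>K. ball x \<delta>)" using assms(2) by auto
  then obtain C where "C \<subseteq> K" "finite C" "K \<subseteq> (\<Union>c\<in>C. ball c \<delta>)"
    using compactE_image[OF assms(1), of K "\<lambda>x. ball x \<delta>"] by blast
  then show ?thesis using that by blast
qed

theorem lemma4p4:
  fixes r :: "'a::polish_space" and \<mu> :: "'a measure" and \<epsilon> :: real
  assumes "IP_tree r \<mu>" and "\<epsilon> > 0"
  shows "\<exists>(m1::nat) (m2::nat) (A::nat \<Rightarrow> 'a set) (B::nat \<Rightarrow> 'a set) (S::'a set).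
     (\<forall>i\<in>{1..m1}. A i \<in> sets \<mu>) \<and> (\<forall>j\<in>{1..m2}. B j \<in> sets \<mu>) \<and> S \<in> sets \<mu> \<and>
     \<comment> \<open>(1) partition\<close>
     (\<Union>i\<in>{1..m1}. A i) \<union> (\<Union>j\<in>{1..m2}. B j) \<union> S = UNIV \<and>
     (\<forall>i\<in>{1..m1}. \<forall>i'\<in>{1..m1}. i \<noteq> i' \<longrightarrow> A i \<inter> A i' = {}) \<and>
     (\<forall>j\<in>{1..m2}. \<forall>j'\<in>{1..m2}. j \<noteq> j' \<longrightarrow> B j \<inter> B j' = {}) \<and>
     (\<forall>i\<in>{1..m1}. \<forall>j\<in>{1..m2}. A i \<inter> B j = {}) \<and>
     (\<forall>i\<in>{1..m1}. A i \<inter> S = {}) \<and> (\<forall>j\<in>{1..m2}. B j \<inter> S = {}) \<and>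
     \<comment> \<open>(2)\<close>
     measure \<mu> S \<le> \<epsilon> \<and>
     (\<forall>i\<in>{1..m1}. (\<forall>x\<in>A i. \<forall>y\<in>A i. dist x y \<le> \<epsilon>) \<and> measure \<mu> (A i) \<le> \<epsilon>) \<and>
     (\<forall>j\<in>{1..m2}. card (B j) = 1) \<and>
     \<comment> \<open>(3)\<close>
     connected (closure ((\<Union>i\<in>{1..m1}. A i) \<union> (\<Union>j\<in>{1..m2}. B j))) \<and>
     \<comment> \<open>(4)\<close>
     (\<forall>x. \<exists>I\<subseteq>{1..m1}. \<exists>J\<subseteq>{1..m2}. \<exists>k\<in>{1..m1}.
        (subtree r x - ((\<Union>i\<in>I. A i) \<union> (\<Union>j\<in>J. B j))) \<union>
        (((\<Union>i\<in>I. A i) \<union> (\<Union>j\<in>J. B j)) - subtree r x) \<subseteq> A k \<union> S)"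
proof -
  have RT: "real_tree TYPE('a)" and sb: "sets \<mu> = sets borel" and Pr: "prob_space \<mu>"
    using assms(1) unfolding IP_tree_def by auto
  interpret prob_space \<mu> by (rule Pr)
  have sp: "space \<mu> = UNIV" by (metis sb sets_eq_imp_space_eq space_borel)
  obtain K where K: "compact K" "measure \<mu> (UNIV - K) \<le> \<epsilon>" using tight[OF sb Pr assms(2)] by blast
  obtain \<rho> X where X: "\<rho> > 0" "finite X" "\<And>y. y \<in> K \<Longrightarrow> measure \<mu> (cball y \<rho> - X) \<le> \<epsilon>"
    using lebesgue_small[OF sb Pr assms(2) K(1)] by blast
  define \<rho>' where "\<rho>' = min \<epsilon> \<rho> / 2"
  define \<delta> where "\<delta> = \<rho>' / 2"
  have pos: "\<rho>' > 0" "\<delta> > 0" "2*\<rho>' \<le> \<epsilon>" "2*\<rho>' \<le> \<rho>" "\<delta> \<le> \<rho>'" "2*\<delta> = \<rho>'"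
    using X(1) assms(2) unfolding \<rho>'_def \<delta>_def by auto
  obtain C where C: "finite C" "C \<subseteq> K" "K \<subseteq> (\<Union>c\<in>C. ball c \<delta>)" using net[OF K(1) pos(2)] by blast
  define Pt where "Pt = insert r {p. \<exists>c\<in>C. p \<in> tseg r c \<and> (\<exists>k::nat. dist r p = real k * \<delta>)}"
  have rP: "r \<in> Pt" unfolding Pt_def by simp
  have finP: "finite Pt"
  proof -
    have fin1: "finite {p. p \<in> tseg r c \<and> (\<exists>k::nat. dist r p = real k * \<delta>)}" for c
    proof -
      let ?Q = "{p. p \<in> tseg r c \<and> (\<exists>k::nat. dist r p = real k * \<delta>)}"
      have inj: "inj_on (dist r) ?Q"
        by (rule inj_onI) (auto intro: tseg_ht_inj[OF RT])
      obtain N :: nat where N: "dist r c / \<delta> < real N" using reals_Archimedean2 by blast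
      have "dist r ` ?Q \<subseteq> (\<lambda>k. real k * \<delta>) ` {..<N}"
      proof
        fix v assume "v \<in> dist r ` ?Q"
        then obtain p k where p: "p \<in> tseg r c" "dist r p = real k * \<delta>" "v = dist r p" by auto
        have "dist r c = dist r p + dist p c" by (rule ht_add[OF RT p(1)])
        then have "real k * \<delta> \<le> dist r c" using p(2) zero_le_dist[of p c] by linarith
        then have "real k \<le> dist r c / \<delta>" using pos(2) by (simp add: field_simps)
        then have "k < N" using N by linarith
        then show "v \<in> (\<lambda>k. real k * \<delta>) ` {..<N}" using p by auto
      qed
      then have "finite (dist r ` ?Q)" using finite_subset by blast
      then show ?thesis using finite_imageD[OF _ inj] by blast
    qed
    have "{p. \<exists>c\<in>C. p \<in> tseg r c \<and> (\<exists>k::nat. dist r p = real k * \<delta>)}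
        = (\<Union>c\<in>C. {p. p \<in> tseg r c \<and> (\<exists>k::nat. dist r p = real k * \<delta>)})" by blast
    then show ?thesis unfolding Pt_def using C(1) fin1 by simp
  qed
  define region where "region a = subtree r a - (\<Union>c\<in>{c\<in>Pt. c \<noteq> a \<and> a \<in> tseg r c}. subtree r c)" for a
  define piece where "piece a = region a \<inter> cball a \<rho>'" for a
  define U where "U = (\<Union>a\<in>Pt. piece a)"
  have regD: "a \<in> tseg r y" if "y \<in> region a" for a y
    using that unfolding region_def subtree_def by blast
  have deepest: "\<exists>a\<in>Pt. a \<in> tseg r y \<and> (\<forall>b\<in>Pt. b \<in> tseg r y \<longrightarrow> dist r b \<le> dist r a)" for y
  proof -
    let ?Q = "Pt \<inter> tseg r y"
    have fQ: "finite (dist r ` ?Q)" using finP by simp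
    have nQ: "dist r ` ?Q \<noteq> {}" using rP tseg_ends(1)[OF RT, of r y] by blast
    obtain a where a: "a \<in> ?Q" "dist r a = Max (dist r ` ?Q)" using Max_in[OF fQ nQ] by auto
    have "\<forall>b\<in>Pt. b \<in> tseg r y \<longrightarrow> dist r b \<le> dist r a"
      using a(2) Max_ge[OF fQ] by auto
    then show ?thesis using a(1) by blast
  qed
  have regI: "y \<in> region a" if a: "a \<in> Pt" "a \<in> tseg r y" "\<forall>b\<in>Pt. b \<in> tseg r y \<longrightarrow> dist r b \<le> dist r a" for a y
  proof -
    { fix c assume c: "c \<in> Pt" "c \<noteq> a" "a \<in> tseg r c" "y \<in> subtree r c"
      then have "c \<in> tseg r y" unfolding subtree_def by auto
      then have "dist r c \<le> dist r a" using a c(1) by auto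
      moreover have "dist r c = dist r a + dist a c" using ht_add[OF RT c(3)] .
      moreover have "dist a c > 0" using c(2) by simp
      ultimately have False by simp }
    then show ?thesis unfolding region_def using a(2) unfolding subtree_def by blast
  qed
  have reg_uniq: "a = b" if H: "a \<in> Pt" "b \<in> Pt" "y \<in> region a" "y \<in> region b" for a b y
  proof (rule ccontr)
    assume ne: "a \<noteq> b"
    have ay: "a \<in> tseg r y" and "b \<in> tseg r y" using regD H by auto
    then have "a \<in> tseg r b \<or> b \<in> tseg r a" by (rule tseg_comp[OF RT])
    then show False
    proof
      assume "a \<in> tseg r b"
      then have "y \<notin> region a" unfolding region_def subtree_def using \<open>b \<in> tseg r y\<close> ne H(2) by blast
      then show False using H(3) by simp
    next
      assume "b \<in> tseg r a"
      then have "y \<notin> region b" unfolding region_def subtree_def using ay ne H(1) by blast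
      then show False using H(4) by simp
    qed
  qed
  have deep_U: "y \<in> U" if "p \<in> Pt" "p \<in> tseg r y" "dist p y \<le> \<rho>'" for p y
  proof -
    obtain a where a: "a \<in> Pt" "a \<in> tseg r y" "\<forall>b\<in>Pt. b \<in> tseg r y \<longrightarrow> dist r b \<le> dist r a"
      using deepest by blast
    have "dist r p \<le> dist r a" using a that by auto
    moreover have "dist r y = dist r a + dist a y" "dist r y = dist r p + dist p y"
      using ht_add[OF RT a(2)] ht_add[OF RT that(2)] by auto
    ultimately have "dist a y \<le> \<rho>'" using that(3) by linarith
    then have "y \<in> piece a" unfolding piece_def using regI[OF a] by simp
    then show ?thesis unfolding U_def using a(1) by auto
  qed
  have rU: "r \<in> U" using deep_U[OF rP tseg_ends(1)[OF RT]] pos by simp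
  have chain: "\<exists>p\<in>Pt. p \<in> tseg r z \<and> dist p z < \<delta>" if H: "c \<in> C" "z \<in> tseg r c" for c z
  proof -
    obtain g where g: "g 0 = r" "g (dist r c) = c" "tseg r c = g ` {0..dist r c}" "isom_on g {0..dist r c}"
      using rt_param[OF RT] .
    obtain s where s: "s \<in> {0..dist r c}" "z = g s" using H(2) g(3) by auto
    define k where "k = nat \<lfloor>s / \<delta>\<rfloor>"
    have fl: "real_of_int \<lfloor>s / \<delta>\<rfloor> \<le> s / \<delta>" "s / \<delta> < real_of_int \<lfloor>s / \<delta>\<rfloor> + 1" by linarith+
    have fl0: "0 \<le> \<lfloor>s / \<delta>\<rfloor>" using s pos(2) by simp
    have rk: "real k = real_of_int \<lfloor>s / \<delta>\<rfloor>" unfolding k_def using fl0 by simp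
    have "real k \<le> s / \<delta>" using fl(1) rk by linarith
    then have k1: "real k * \<delta> \<le> s" using pos(2) by (simp add: le_divide_eq)
    have "s / \<delta> < real k + 1" using fl(2) rk by linarith
    then have "s < (real k + 1) * \<delta>" using pos(2) by (simp add: divide_less_eq)
    then have k2: "s < real k * \<delta> + \<delta>" by (simp add: algebra_simps)
    have ks: "real k * \<delta> \<in> {0..dist r c}" using k1 s pos(2) by auto
    define p where "p = g (real k * \<delta>)"
    have dp: "dist r p = real k * \<delta>"
      using g(4) ks g(1) unfolding isom_on_def p_def
      by (metis abs_minus_commute abs_of_nonneg atLeastAtMost_iff diff_zero order_refl zero_le_dist
          atLeastAtMost_iff)
    have "p \<in> tseg r c" using g(3) ks p_def by auto
    then have pP: "p \<in> Pt" unfolding Pt_def using H(1) dp by auto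
    have "tseg r z = g ` {0..s}" using tseg_isom[OF RT isom_sub[OF g(4)], of 0 s] s g(1) by auto
    then have pz: "p \<in> tseg r z" using k1 ks p_def by auto
    have "dist p z = \<bar>real k * \<delta> - s\<bar>" using g(4) ks s unfolding isom_on_def p_def by auto
    then have "dist p z = s - real k * \<delta>" using k1 by simp
    then show ?thesis using pP pz k2 by auto
  qed
  have chain_U: "z \<in> U" if H: "c \<in> C" "z \<in> tseg r c" for c z
  proof -
    obtain p where "p \<in> Pt" "p \<in> tseg r z" "dist p z < \<delta>" using chain[OF H] by blast
    then show ?thesis using deep_U pos(5) by force
  qed
  have K_U: "y \<in> U" if H: "y \<in> K" for y
  proof (cases "dist r y \<le> \<rho>'")
    case True then show ?thesis using deep_U[OF rP tseg_ends(1)[OF RT]] by simp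
  next
    case False
    obtain c where c: "c \<in> C" "dist c y < \<delta>" using C(3) H by auto
    obtain g where g: "g 0 = r" "g (dist r y) = y" "tseg r y = g ` {0..dist r y}" "isom_on g {0..dist r y}"
      using rt_param[OF RT] .
    define q where "q = g (dist r y - \<delta>)"
    have qi: "dist r y - \<delta> \<in> {0..dist r y}" using False pos by auto
    have q1: "q \<in> tseg r y" using g(3) qi q_def by auto
    have "dist q y = \<bar>(dist r y - \<delta>) - dist r y\<bar>"
      using g(4) qi g(2) unfolding isom_on_def q_def by (metis atLeastAtMost_iff order_refl zero_le_dist)
    then have q2: "dist q y = \<delta>" using pos by simp
    have "q \<notin> tseg y c"
    proof
      assume "q \<in> tseg y c"
      then have "dist y q + dist q c = dist y c" by (rule tseg_point(1)[OF RT])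
      then show False using q2 c(2) zero_le_dist[of q c] dist_commute[of y q] dist_commute[of y c] by linarith
    qed
    moreover have "tseg r y \<subseteq> tseg r c \<union> tseg c y" by (rule tseg_tripod[OF RT])
    moreover have "tseg c y = tseg y c" by (rule tseg_sym[OF RT])
    ultimately have "q \<in> tseg r c" using q1 by blast
    then obtain p where p: "p \<in> Pt" "p \<in> tseg r q" "dist p q < \<delta>" using chain[OF c(1)] by blast
    have py: "p \<in> tseg r y" using tseg_trans[OF RT p(2) q1] .
    have "dist r q = dist r p + dist p q" "dist r y = dist r q + dist q y" "dist r y = dist r p + dist p y"
      using ht_add[OF RT p(2)] ht_add[OF RT q1] ht_add[OF RT py] by auto
    then have "dist p y \<le> \<rho>'" using q2 p(3) pos(6) by linarith
    then show ?thesis using deep_U[OF p(1) py] by simp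
  qed
  have seg_U: "tseg r y \<subseteq> U" if H: "y \<in> U" for y
  proof
    fix z assume z: "z \<in> tseg r y"
    obtain a where a: "a \<in> Pt" "y \<in> region a" "dist a y \<le> \<rho>'" using H unfolding U_def piece_def by auto
    have ay: "a \<in> tseg r y" using regD a(2) .
    from tseg_comp[OF RT ay z] show "z \<in> U"
    proof
      assume az: "a \<in> tseg r z"
      have "dist r z = dist r a + dist a z" "dist r y = dist r z + dist z y" "dist r y = dist r a + dist a y"
        using ht_add[OF RT az] ht_add[OF RT z] ht_add[OF RT ay] by auto
      then have "dist a z \<le> \<rho>'" using a(3) zero_le_dist[of z y] by linarith
      then show ?thesis using deep_U[OF a(1) az] by simp
    next
      assume za: "z \<in> tseg r a"
      show ?thesis
      proof (cases "a = r")
        case True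
        then have "z = r" using za by simp
        then show ?thesis using rU by simp
      next
        case False
        then obtain c where "c \<in> C" "a \<in> tseg r c" using a(1) unfolding Pt_def by auto
        then show ?thesis using chain_U tseg_trans[OF RT za] by blast
      qed
    qed
  qed
  have Uconn: "connected U"
  proof -
    have "U = \<Union> ((\<lambda>y. tseg r y) ` U)" using seg_U tseg_ends(2)[OF RT] by blast
    moreover have "connected (\<Union> ((\<lambda>y. tseg r y) ` U))"
    proof (rule connected_Union)
      show "\<And>s. s \<in> (\<lambda>y. tseg r y) ` U \<Longrightarrow> connected s" using tseg_compact(2)[OF RT] by blast
      show "\<Inter> ((\<lambda>y. tseg r y) ` U) \<noteq> {}" using tseg_ends(1)[OF RT] by blast
    qed
    ultimately show ?thesis by simp
  qed
  have st_b: "subtree r a \<in> sets borel" for a using subtree_closed[OF RT] by (rule borel_closed)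
  have reg_b: "region a \<in> sets borel" for a
  proof -
    have "finite {c\<in>Pt. c \<noteq> a \<and> a \<in> tseg r c}" using finP by simp
    then show ?thesis unfolding region_def using st_b by (intro sets.Diff sets.finite_UN) auto
  qed
  have piece_b: "piece a \<in> sets borel" for a
    unfolding piece_def using reg_b[of a] borel_closed[OF closed_cball[of a "\<rho>'"]] by (rule sets.Int)
  have U_b: "U \<in> sets borel" unfolding U_def using finP piece_b by (intro sets.finite_UN) auto
  have X_b: "X \<in> sets borel" using X(2) by (intro borel_closed finite_imp_closed)
  have K_b: "K \<in> sets borel" using K(1) by (intro borel_closed compact_imp_closed)
  obtain ps where ps: "set ps = Pt" "distinct ps" using finite_distinct_list[OF finP] by blast
  have finXU: "finite (X \<inter> U)" using X(2) by simp
  obtain bs where bs: "set bs = X \<inter> U" "distinct bs" using finite_distinct_list[OF finXU] by blast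
  define m1 where "m1 = length ps"
  define m2 where "m2 = length bs"
  define A where "A i = piece (ps ! (i - 1)) - X" for i
  define B where "B j = {bs ! (j - 1)}" for j
  define S where "S = UNIV - U"
  have psP: "ps ! (i - 1) \<in> Pt" if H: "i \<in> {1..m1}" for i
    using H ps(1) unfolding m1_def by (metis atLeastAtMost_iff diff_less less_le_trans nth_mem zero_less_one le_eq_less_or_eq)
  have psI: "\<exists>i\<in>{1..m1}. ps ! (i - 1) = a" if H: "a \<in> Pt" for a
  proof -
    obtain n where "n < length ps" "ps ! n = a" using H ps(1) by (metis in_set_conv_nth)
    then show ?thesis by (intro bexI[of _ "Suc n"]) (auto simp: m1_def)
  qed
  have psD: "ps ! (i - 1) \<noteq> ps ! (i' - 1)" if H: "i \<in> {1..m1}" "i' \<in> {1..m1}" "i \<noteq> i'" for i i'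
  proof -
    have "i - 1 < length ps" "i' - 1 < length ps" "i - 1 \<noteq> i' - 1" using H unfolding m1_def by auto
    then show ?thesis using nth_eq_iff_index_eq[OF ps(2)] by blast
  qed
  have bsX: "bs ! (j - 1) \<in> X \<inter> U" if H: "j \<in> {1..m2}" for j
  proof -
    have "j - 1 < length bs" using H unfolding m2_def by auto
    then show ?thesis using bs(1) nth_mem by blast
  qed
  have bsI: "\<exists>j\<in>{1..m2}. bs ! (j - 1) = b" if H: "b \<in> X \<inter> U" for b
  proof -
    obtain n where "n < length bs" "bs ! n = b" using H bs(1) by (metis in_set_conv_nth)
    then show ?thesis by (intro bexI[of _ "Suc n"]) (auto simp: m2_def)
  qed
  have bsD: "bs ! (j - 1) \<noteq> bs ! (j' - 1)" if H: "j \<in> {1..m2}" "j' \<in> {1..m2}" "j \<noteq> j'" for j j'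
  proof -
    have "j - 1 < length bs" "j' - 1 < length bs" "j - 1 \<noteq> j' - 1" using H unfolding m2_def by auto
    then show ?thesis using nth_eq_iff_index_eq[OF bs(2)] by blast
  qed
  have AU: "A i \<subseteq> U" if H: "i \<in> {1..m1}" for i
    using psP[OF H] unfolding A_def U_def by blast
  have UAB: "(\<Union>i\<in>{1..m1}. A i) \<union> (\<Union>j\<in>{1..m2}. B j) = U"
  proof
    show "(\<Union>i\<in>{1..m1}. A i) \<union> (\<Union>j\<in>{1..m2}. B j) \<subseteq> U"
      using AU bsX unfolding B_def by blast
    show "U \<subseteq> (\<Union>i\<in>{1..m1}. A i) \<union> (\<Union>j\<in>{1..m2}. B j)"
    proof
      fix y assume y: "y \<in> U"
      then obtain a where a: "a \<in> Pt" "y \<in> piece a" unfolding U_def by blast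
      show "y \<in> (\<Union>i\<in>{1..m1}. A i) \<union> (\<Union>j\<in>{1..m2}. B j)"
      proof (cases "y \<in> X")
        case True
        then obtain j where "j \<in> {1..m2}" "bs ! (j - 1) = y" using bsI y by blast
        then show ?thesis unfolding B_def by blast
      next
        case False
        obtain i where "i \<in> {1..m1}" "ps ! (i - 1) = a" using psI[OF a(1)] by blast
        then show ?thesis unfolding A_def using a(2) False by blast
      qed
    qed
  qed
  have c1: "\<forall>i\<in>{1..m1}. A i \<in> sets \<mu>"
    unfolding sb A_def using piece_b X_b by blast
  have c2: "\<forall>j\<in>{1..m2}. B j \<in> sets \<mu>"
    unfolding sb B_def by simp
  have c3: "S \<in> sets \<mu>" unfolding sb S_def using U_b by (simp add: sets.compl_sets[of borel, simplified])
  have c4: "(\<Union>i\<in>{1..m1}. A i) \<union> (\<Union>j\<in>{1..m2}. B j) \<union> S = UNIV"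
    unfolding UAB S_def by blast
  have c5: "\<forall>i\<in>{1..m1}. \<forall>i'\<in>{1..m1}. i \<noteq> i' \<longrightarrow> A i \<inter> A i' = {}"
  proof (intro ballI impI)
    fix i i' assume H: "i \<in> {1..m1}" "i' \<in> {1..m1}" "i \<noteq> i'"
    show "A i \<inter> A i' = {}"
      using reg_uniq[OF psP[OF H(1)] psP[OF H(2)]] psD[OF H] unfolding A_def piece_def by blast
  qed
  have c6: "\<forall>j\<in>{1..m2}. \<forall>j'\<in>{1..m2}. j \<noteq> j' \<longrightarrow> B j \<inter> B j' = {}"
    using bsD unfolding B_def by blast
  have c7: "\<forall>i\<in>{1..m1}. \<forall>j\<in>{1..m2}. A i \<inter> B j = {}"
    using bsX unfolding A_def B_def by blast
  have c8: "\<forall>i\<in>{1..m1}. A i \<inter> S = {}" using AU unfolding S_def by blast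
  have c9: "\<forall>j\<in>{1..m2}. B j \<inter> S = {}" using bsX unfolding B_def S_def by blast
  have c10: "measure \<mu> S \<le> \<epsilon>"
  proof -
    have "S \<subseteq> UNIV - K" unfolding S_def using K_U by blast
    moreover have "UNIV - K \<in> sets \<mu>" unfolding sb using K_b by (simp add: sets.compl_sets[of borel, simplified])
    ultimately show ?thesis using finite_measure_mono K(2) by (meson order_trans)
  qed
  have c11: "\<forall>i\<in>{1..m1}. (\<forall>x\<in>A i. \<forall>y\<in>A i. dist x y \<le> \<epsilon>) \<and> measure \<mu> (A i) \<le> \<epsilon>"
  proof (rule ballI)
    fix i assume H: "i \<in> {1..m1}"
    define a where "a = ps ! (i - 1)"
    have Ac: "A i \<subseteq> cball a \<rho>' - X" unfolding A_def piece_def a_def by blast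
    have dd: "dist x y \<le> 2 * \<rho>'" if "x \<in> A i" "y \<in> A i" for x y
    proof -
      have "dist a x \<le> \<rho>'" "dist a y \<le> \<rho>'" using that Ac by auto
      then show ?thesis using dist_triangle[of x y a] dist_commute[of a x] by linarith
    qed
    have d1: "\<forall>x\<in>A i. \<forall>y\<in>A i. dist x y \<le> \<epsilon>" using dd pos(3) by fastforce
    have d2: "measure \<mu> (A i) \<le> \<epsilon>"
    proof (cases "\<exists>y\<in>A i. y \<in> K")
      case True
      then obtain y where y: "y \<in> A i" "y \<in> K" by blast
      have "A i \<subseteq> cball y \<rho> - X"
      proof
        fix z assume z: "z \<in> A i"
        then have "dist y z \<le> \<rho>" using dd[OF y(1) z] pos(4) by simp
        then show "z \<in> cball y \<rho> - X" using z Ac by auto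
      qed
      moreover have "cball y \<rho> - X \<in> sets \<mu>" unfolding sb using borel_closed[OF closed_cball[of y \<rho>]] X_b by (rule sets.Diff)
      ultimately show ?thesis using finite_measure_mono X(3)[OF y(2)] by (meson order_trans)
    next
      case False
      then have "A i \<subseteq> UNIV - K" by blast
      moreover have "UNIV - K \<in> sets \<mu>" unfolding sb using K_b by (simp add: sets.compl_sets[of borel, simplified])
      ultimately show ?thesis using finite_measure_mono K(2) by (meson order_trans)
    qed
    show "(\<forall>x\<in>A i. \<forall>y\<in>A i. dist x y \<le> \<epsilon>) \<and> measure \<mu> (A i) \<le> \<epsilon>" using d1 d2 by blast
  qed
  have c12: "\<forall>j\<in>{1..m2}. card (B j) = 1" unfolding B_def by simp
  have c13: "connected (closure ((\<Union>i\<in>{1..m1}. A i) \<union> (\<Union>j\<in>{1..m2}. B j)))"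
    unfolding UAB by (rule connected_imp_connected_closure[OF Uconn])
  have c14: "\<forall>x. \<exists>I\<subseteq>{1..m1}. \<exists>J\<subseteq>{1..m2}. \<exists>k\<in>{1..m1}.
        (subtree r x - ((\<Union>i\<in>I. A i) \<union> (\<Union>j\<in>J. B j))) \<union>
        (((\<Union>i\<in>I. A i) \<union> (\<Union>j\<in>J. B j)) - subtree r x) \<subseteq> A k \<union> S"
  proof
    fix x
    obtain ax where ax: "ax \<in> Pt" "ax \<in> tseg r x" "\<forall>b\<in>Pt. b \<in> tseg r x \<longrightarrow> dist r b \<le> dist r ax"
      using deepest by blast
    have xax: "x \<in> region ax" using regI[OF ax] .
    obtain k where k: "k \<in> {1..m1}" "ps ! (k - 1) = ax" using psI[OF ax(1)] by blast
    define I where "I = {i\<in>{1..m1}. ps ! (i - 1) \<in> subtree r x \<and> ps ! (i - 1) \<noteq> ax}"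
    define J where "J = {j\<in>{1..m2}. bs ! (j - 1) \<in> subtree r x}"
    have part1: "y \<in> A k \<union> S" if Y: "y \<in> subtree r x" "y \<notin> (\<Union>i\<in>I. A i) \<union> (\<Union>j\<in>J. B j)" for y
    proof (rule ccontr)
      assume nk: "y \<notin> A k \<union> S"
      then have yU: "y \<in> U" unfolding S_def by blast
      have yX: "y \<notin> X"
      proof
        assume "y \<in> X"
        then obtain j where j: "j \<in> {1..m2}" "bs ! (j - 1) = y" using bsI yU by blast
        then have "j \<in> J" unfolding J_def using Y(1) by simp
        then show False using Y(2) j unfolding B_def by blast
      qed
      obtain a where a: "a \<in> Pt" "y \<in> piece a" using yU unfolding U_def by blast
      obtain i where i: "i \<in> {1..m1}" "ps ! (i - 1) = a" using psI[OF a(1)] by blast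
      have yAi: "y \<in> A i" unfolding A_def using i(2) a(2) yX by simp
      have "i \<notin> I" using Y(2) yAi by blast
      then have "a \<notin> subtree r x \<or> a = ax" unfolding I_def using i by blast
      moreover have "a \<noteq> ax"
      proof
        assume "a = ax"
        then have "i = k" using psD[OF i(1) k(1)] i(2) k(2) by metis
        then show False using yAi nk by simp
      qed
      ultimately have nax: "a \<notin> subtree r x" "a \<noteq> ax" by auto
      have yreg: "y \<in> region a" using a(2) unfolding piece_def by blast
      have ay: "a \<in> tseg r y" using regD[OF yreg] .
      have xy: "x \<in> tseg r y" using Y(1) unfolding subtree_def by blast
      have "a \<in> tseg r x"
        using tseg_comp[OF RT ay xy] nax(1) unfolding subtree_def by blast
      from tseg_comp[OF RT this ax(2)] show False
      proof
        assume "a \<in> tseg r ax"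
        moreover have "ax \<in> tseg r y" using tseg_trans[OF RT ax(2) xy] .
        ultimately have "y \<notin> region a" unfolding region_def subtree_def using ax(1) nax(2) by blast
        then show False using yreg by simp
      next
        assume "ax \<in> tseg r a"
        then have "x \<notin> region ax" unfolding region_def subtree_def using a(1) nax(2) \<open>a \<in> tseg r x\<close> by blast
        then show False using xax by simp
      qed
    qed
    have part2: "y \<in> subtree r x" if Y: "y \<in> (\<Union>i\<in>I. A i) \<union> (\<Union>j\<in>J. B j)" for y
    proof -
      { fix i assume i: "i \<in> I" "y \<in> A i"
        then have "y \<in> region (ps ! (i - 1))" unfolding A_def piece_def by blast
        then have "ps ! (i - 1) \<in> tseg r y" by (rule regD)
        moreover have "x \<in> tseg r (ps ! (i - 1))" using i(1) unfolding I_def subtree_def by blast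
        ultimately have ?thesis unfolding subtree_def using tseg_trans[OF RT] by blast }
      moreover
      { fix j assume j: "j \<in> J" "y \<in> B j"
        then have ?thesis unfolding J_def B_def by auto }
      ultimately show ?thesis using Y by blast
    qed
    have "I \<subseteq> {1..m1}" "J \<subseteq> {1..m2}" unfolding I_def J_def by auto
    moreover have "(subtree r x - ((\<Union>i\<in>I. A i) \<union> (\<Union>j\<in>J. B j))) \<union>
        (((\<Union>i\<in>I. A i) \<union> (\<Union>j\<in>J. B j)) - subtree r x) \<subseteq> A k \<union> S"
      using part1 part2 by blast
    ultimately show "\<exists>I\<subseteq>{1..m1}. \<exists>J\<subseteq>{1..m2}. \<exists>k\<in>{1..m1}.
        (subtree r x - ((\<Union>i\<in>I. A i) \<union> (\<Union>j\<in>J. B j))) \<union>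
        (((\<Union>i\<in>I. A i) \<union> (\<Union>j\<in>J. B j)) - subtree r x) \<subseteq> A k \<union> S"
      using k(1) by blast
  qed
  show ?thesis
    apply (rule exI[of _ m1], rule exI[of _ m2], rule exI[of _ A], rule exI[of _ B], rule exI[of _ S])
    using c1 c2 c3 c4 c5 c6 c7 c8 c9 c10 c11 c12 c13 c14 by (intro conjI) assumption+
qed

end
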